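(* Let $f(x)=f_{d|d-1}(x_d|x_{d-1})\cdots f_{2|1}(x_2|x_1)f_1(x_1)$ be the density of a discrete-time Markov process $X=(X_1,\dots,X_d)$, and for $i=2,\dots,d$ let $m_i$ be the rank of $(t,s)\mapsto f_{i|i-1}(t|s)$, $m=\max_i m_i$. For an integer $k\ge0$ with $2k+1\le d$, let $\alpha=\{1,3,\dots,2k+1\}$. Then $\mathrm{rank}_\alpha(f)\le m_2m_3\cdots m_{2k+2}\le m^{2k+1}$ if $2k+1<d$, and $\mathrm{rank}_\alpha(f)\le m_2m_3\cdots m_{2k+1}\le m^{2k}$ if $2k+1=d$. *)

theory Defs
  imports "HOL-Analysis.Analysis" "HOL-Library.Extended_Nat"
begin

text \<open>Rank of a bivariate function g on A x B: the least r such that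
  g t s = sum_{j<r} u_j(t) v_j(s) for all t in A, s in B; infinity if no such
  finite decomposition exists.\<close>
definition frank :: "'a set \<Rightarrow> 'b set \<Rightarrow> ('a \<Rightarrow> 'b \<Rightarrow> real) \<Rightarrow> enat" where
  "frank A B g = Inf {enat r | r. \<exists>u v. \<forall>t\<in>A. \<forall>s\<in>B.
      g t s = (\<Sum>j<r. u j t * v j s)}"

definition merge_vars :: "nat set \<Rightarrow> (nat \<Rightarrow> 'a) \<Rightarrow> (nat \<Rightarrow> 'a) \<Rightarrow> nat \<Rightarrow> 'a" where
  "merge_vars \<alpha> y z = (\<lambda>i. if i \<in> \<alpha> then y i else z i)"

definition alpha_rank :: "nat \<Rightarrow> nat set \<Rightarrow> ((nat \<Rightarrow> 'a) \<Rightarrow> real) \<Rightarrow> enat" where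
  "alpha_rank d \<alpha> f = frank (PiE \<alpha> (\<lambda>_. UNIV)) (PiE ({1..d} - \<alpha>) (\<lambda>_. UNIV))
      (\<lambda>y z. f (merge_vars \<alpha> y z))"

end

theory Submission
  imports Defs
begin

lemma frank_le:
  assumes "finite J" "\<forall>t\<in>A. \<forall>s\<in>B. g t s = (\<Sum>j\<in>J. u j t * v j s)"
  shows "frank A B g \<le> enat (card J)"
proof -
  obtain h where h: "bij_betw h {0..<card J} J" using ex_bij_betw_nat_finite[OF assms(1)] by blast
  have "\<forall>t\<in>A. \<forall>s\<in>B. g t s = (\<Sum>j<card J. u (h j) t * v (h j) s)"
    using assms(2) sum.reindex_bij_betw[OF h, of "\<lambda>j. u j _ * v j _"]
    by (simp add: lessThan_atLeast0)
  then show ?thesis unfolding frank_def by (intro Inf_lower) (auto intro!: exI[of _ "card J"])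
qed

lemma frank_obtain:
  assumes "frank A B g = enat r"
  obtains u v where "\<forall>t\<in>A. \<forall>s\<in>B. g t s = (\<Sum>j<r. u j t * v j s)"
proof -
  let ?S = "{enat r | r. \<exists>u v. \<forall>t\<in>A. \<forall>s\<in>B. g t s = (\<Sum>j<r. u j t * v j s)}"
  have ne: "?S \<noteq> {}" using assms unfolding frank_def by (auto simp: Inf_enat_def split: if_splits)
  then obtain x where "x \<in> ?S" by blast
  moreover have "Inf ?S = (LEAST x. x \<in> ?S)" unfolding Inf_enat_def using ne by (intro if_not_P)
  ultimately have "Inf ?S \<in> ?S" using LeastI[of "\<lambda>x. x \<in> ?S" x] by simp
  then show ?thesis using assms that unfolding frank_def by auto
qed

lemma frank_zero:
  assumes "\<forall>t\<in>A. \<forall>s\<in>B. g t s = 0"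
  shows "frank A B g = 0"
proof -
  have "frank A B g \<le> enat (card ({}::nat set))" by (rule frank_le) (use assms in auto)
  then show ?thesis by (simp add: zero_enat_def[symmetric])
qed

lemma frank_mult:
  assumes "\<forall>t\<in>A. \<forall>s\<in>B. g t s = g1 t s * g2 t s"
  shows "frank A B g \<le> frank A B g1 * frank A B g2"
proof (cases "frank A B g1 = 0 \<or> frank A B g2 = 0")
  case True
  then show ?thesis
  proof
    assume "frank A B g1 = 0"
    have "\<forall>t\<in>A. \<forall>s\<in>B. g1 t s = 0"
      by (rule frank_obtain[of A B g1 0]) (use \<open>frank A B g1 = 0\<close> in \<open>simp_all add: zero_enat_def[symmetric]\<close>)
    then have "frank A B g = 0" using assms by (intro frank_zero) auto
    then show ?thesis by simp
  next
    assume "frank A B g2 = 0"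
    have "\<forall>t\<in>A. \<forall>s\<in>B. g2 t s = 0"
      by (rule frank_obtain[of A B g2 0]) (use \<open>frank A B g2 = 0\<close> in \<open>simp_all add: zero_enat_def[symmetric]\<close>)
    then have "frank A B g = 0" using assms by (intro frank_zero) auto
    then show ?thesis by simp
  qed
next
  case False
  show ?thesis
  proof (cases "frank A B g1 = \<infinity> \<or> frank A B g2 = \<infinity>")
    case True
    then have "frank A B g1 * frank A B g2 = \<infinity>" using False by (simp only: imult_is_infinity) blast
    then show ?thesis by simp
  next
    case F2: False
    then obtain r1 r2 where r: "frank A B g1 = enat r1" "frank A B g2 = enat r2" by auto
    obtain u1 v1 where d1: "\<forall>t\<in>A. \<forall>s\<in>B. g1 t s = (\<Sum>j<r1. u1 j t * v1 j s)"
      using frank_obtain[OF r(1)] by blast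
    obtain u2 v2 where d2: "\<forall>t\<in>A. \<forall>s\<in>B. g2 t s = (\<Sum>j<r2. u2 j t * v2 j s)"
      using frank_obtain[OF r(2)] by blast
    have "frank A B g \<le> enat (card ({..<r1} \<times> {..<r2}))"
    proof (rule frank_le[where u="\<lambda>(a,b) t. u1 a t * u2 b t" and v="\<lambda>(a,b) s. v1 a s * v2 b s"])
      show "finite ({..<r1} \<times> {..<r2})" by simp
      show "\<forall>t\<in>A. \<forall>s\<in>B. g t s = (\<Sum>j\<in>{..<r1} \<times> {..<r2}.
             (case j of (a, b) \<Rightarrow> \<lambda>t. u1 a t * u2 b t) t * (case j of (a, b) \<Rightarrow> \<lambda>s. v1 a s * v2 b s) s)"
      proof (intro ballI)
        fix t s assume ts: "t \<in> A" "s \<in> B"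
        have "g t s = (\<Sum>a<r1. u1 a t * v1 a s) * (\<Sum>b<r2. u2 b t * v2 b s)"
          using assms d1 d2 ts by auto
        also have "\<dots> = (\<Sum>a<r1. \<Sum>b<r2. (u1 a t * u2 b t) * (v1 a s * v2 b s))"
          by (simp add: sum_product mult_ac)
        also have "\<dots> = (\<Sum>(a,b)\<in>{..<r1} \<times> {..<r2}. (u1 a t * u2 b t) * (v1 a s * v2 b s))"
          by (simp add: sum.cartesian_product)
        finally show "g t s = (\<Sum>j\<in>{..<r1} \<times> {..<r2}.
             (case j of (a, b) \<Rightarrow> \<lambda>t. u1 a t * u2 b t) t * (case j of (a, b) \<Rightarrow> \<lambda>s. v1 a s * v2 b s) s)"
          by (simp add: case_prod_beta)
      qed
    qed
    then show ?thesis using r by simp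
  qed
qed

lemma frank_sep:
  assumes "\<forall>t\<in>A. \<forall>s\<in>B. g t s = a t * b s"
  shows "frank A B g \<le> 1"
proof -
  have "frank A B g \<le> enat (card {0::nat})"
    by (rule frank_le[where u="\<lambda>_. a" and v="\<lambda>_. b"]) (use assms in auto)
  then show ?thesis by (simp add: one_enat_def)
qed

lemma frank_lift1:
  "frank A B (\<lambda>y z. h (p y) (q z)) \<le> frank UNIV UNIV h"
proof (cases "frank UNIV UNIV h")
  case (enat r)
  then obtain u v where d: "\<forall>t\<in>UNIV. \<forall>s\<in>UNIV. h t s = (\<Sum>j<r. u j t * v j s)"
    using frank_obtain by blast
  have "frank A B (\<lambda>y z. h (p y) (q z)) \<le> enat (card {..<r})"
    by (rule frank_le[where u="\<lambda>j y. u j (p y)" and v="\<lambda>j z. v j (q z)"]) (use d in auto)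
  then show ?thesis using enat by simp
qed simp

lemma frank_lift2:
  "frank A B (\<lambda>y z. h (q z) (p y)) \<le> frank UNIV UNIV h"
proof (cases "frank UNIV UNIV h")
  case (enat r)
  then obtain u v where d: "\<forall>t\<in>UNIV. \<forall>s\<in>UNIV. h t s = (\<Sum>j<r. u j t * v j s)"
    using frank_obtain by blast
  have "frank A B (\<lambda>y z. h (q z) (p y)) \<le> enat (card {..<r})"
    by (rule frank_le[where u="\<lambda>j y. v j (p y)" and v="\<lambda>j z. u j (q z)"]) (use d in \<open>auto simp: mult.commute\<close>)
  then show ?thesis using enat by simp
qed simp

lemma frank_prod:
  assumes "finite I" "\<And>i. i \<in> I \<Longrightarrow> frank A B (F i) \<le> c i"
  shows "frank A B (\<lambda>y z. \<Prod>i\<in>I. F i y z) \<le> (\<Prod>i\<in>I. c i)"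
  using assms
proof (induction I rule: finite_induct)
  case empty
  have "frank A B (\<lambda>y z. \<Prod>i\<in>{}. F i y z) \<le> 1"
    by (rule frank_sep[where a="\<lambda>_. 1" and b="\<lambda>_. 1"]) simp
  then show ?case by simp
next
  case (insert x I)
  have "frank A B (\<lambda>y z. \<Prod>i\<in>insert x I. F i y z)
        \<le> frank A B (F x) * frank A B (\<lambda>y z. \<Prod>i\<in>I. F i y z)"
    by (rule frank_mult) (use insert in auto)
  also have "\<dots> \<le> c x * (\<Prod>i\<in>I. c i)"
    by (rule mult_mono) (use insert in auto)
  finally show ?case using insert by simp
qed

lemma enat_prod_le_pow:
  fixes c :: "nat \<Rightarrow> enat"
  assumes "finite I" "\<And>i. i \<in> I \<Longrightarrow> c i \<le> M"
  shows "(\<Prod>i\<in>I. c i) \<le> M ^ card I"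
  using assms
proof (induction I rule: finite_induct)
  case (insert x I)
  then show ?case by (auto intro!: mult_mono)
qed simp


lemma mem_alpha: "(i::nat) \<in> (\<lambda>j. 2*j+1) ` {..k} \<longleftrightarrow> odd i \<and> i \<le> 2*k+1"
proof
  assume "odd i \<and> i \<le> 2*k+1"
  then have "i div 2 \<in> {..k}" "i = 2 * (i div 2) + 1" by auto
  then show "i \<in> (\<lambda>j. 2*j+1) ` {..k}" by (rule rev_image_eqI)
qed auto

lemma key:
  fixes f :: "(nat \<Rightarrow> real) \<Rightarrow> real"
  assumes f_def: "\<forall>x. f x = (\<Prod>i\<in>{2..d}. fc i (x i) (x (i - 1))) * f1 (x 1)"
    and n: "2*k+1 \<le> n" "n \<le> d" "n = d \<or> n = 2*k+2" "n \<le> 2*k+2"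
  shows "alpha_rank d ((\<lambda>j. 2 * j + 1) ` {..k}) f \<le> (\<Prod>i\<in>{2..n}. frank UNIV UNIV (fc i))"
proof -
  define \<alpha> where "\<alpha> = (\<lambda>j. 2 * j + 1) ` {..k}"
  define M :: "(nat\<Rightarrow>real)\<Rightarrow>(nat\<Rightarrow>real)\<Rightarrow>nat\<Rightarrow>real" where "M = merge_vars \<alpha>"
  define A where "A = PiE \<alpha> (\<lambda>_. UNIV :: real set)"
  define B where "B = PiE ({1..d} - \<alpha>) (\<lambda>_. UNIV :: real set)"
  have Mv: "M y z i = (if odd i \<and> i \<le> 2*k+1 then y i else z i)" for y z i
    unfolding M_def merge_vars_def \<alpha>_def by (simp only: mem_alpha)
  have split: "{2..d} = {2..n} \<union> {n+1..d}" using n by auto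
  have eq: "f (M y z) = (\<Prod>i\<in>{2..n}. fc i (M y z i) (M y z (i-1))) *
            ((\<Prod>i\<in>{n+1..d}. fc i (z i) (z (i-1))) * f1 (y 1))" for y z
  proof -
    have "(\<Prod>i\<in>{n+1..d}. fc i (M y z i) (M y z (i-1))) = (\<Prod>i\<in>{n+1..d}. fc i (z i) (z (i-1)))"
    proof (rule prod.cong)
      fix i assume "i \<in> {n+1..d}"
      then have "M y z i = z i" "M y z (i-1) = z (i-1)" using n by (auto simp: Mv)
      then show "fc i (M y z i) (M y z (i-1)) = fc i (z i) (z (i-1))" by simp
    qed simp
    moreover have "M y z 1 = y 1" by (simp add: Mv)
    moreover have u: "(\<Prod>i\<in>{2..d}. g i) = (\<Prod>i\<in>{2..n}. g i) * (\<Prod>i\<in>{n+1..d}. g i)" for g :: "nat \<Rightarrow> real"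
      unfolding split by (rule prod.union_disjoint) auto
    ultimately show ?thesis using f_def
      by (simp only: u)
  qed
  have "alpha_rank d \<alpha> f = frank A B (\<lambda>y z. f (M y z))"
    unfolding alpha_rank_def A_def B_def M_def by simp
  also have "\<dots> \<le> frank A B (\<lambda>y z. \<Prod>i\<in>{2..n}. fc i (M y z i) (M y z (i-1))) *
       frank A B (\<lambda>y z. (\<Prod>i\<in>{n+1..d}. fc i (z i) (z (i-1))) * f1 (y 1))"
    by (rule frank_mult) (simp add: eq)
  also have "\<dots> \<le> (\<Prod>i\<in>{2..n}. frank UNIV UNIV (fc i)) * 1"
  proof (rule mult_mono)
    show "frank A B (\<lambda>y z. \<Prod>i\<in>{2..n}. fc i (M y z i) (M y z (i-1))) \<le> (\<Prod>i\<in>{2..n}. frank UNIV UNIV (fc i))"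
    proof (rule frank_prod)
      fix i assume i: "i \<in> {2..n}"
      show "frank A B (\<lambda>y z. fc i (M y z i) (M y z (i-1))) \<le> frank UNIV UNIV (fc i)"
      proof (cases "odd i")
        case True
        have "i \<le> 2*k+1" using True i n by (cases "i = 2*k+2") auto
        then have "(\<lambda>y z. fc i (M y z i) (M y z (i-1))) = (\<lambda>y z. fc i (y i) (z (i-1)))"
          using True i n by (auto simp: Mv fun_eq_iff)
        then show ?thesis using frank_lift1[of A B "fc i" "\<lambda>y. y i" "\<lambda>z. z (i-1)"] by simp
      next
        case False
        then have "(\<lambda>y z. fc i (M y z i) (M y z (i-1))) = (\<lambda>y z. fc i (z i) (y (i-1)))"
          using i n by (auto simp: Mv fun_eq_iff)
        then show ?thesis using frank_lift2[of A B "fc i" "\<lambda>z. z i" "\<lambda>y. y (i-1)"] by simp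
      qed
    qed simp
    show "frank A B (\<lambda>y z. (\<Prod>i\<in>{n+1..d}. fc i (z i) (z (i-1))) * f1 (y 1)) \<le> 1"
      by (rule frank_sep[where a="\<lambda>y. f1 (y 1)" and b="\<lambda>z. \<Prod>i\<in>{n+1..d}. fc i (z i) (z (i-1))"])
         (simp add: mult.commute)
  qed simp_all
  finally show ?thesis unfolding \<alpha>_def by simp
qed

theorem mainTheorem9:
  fixes d k :: nat
    and f1 :: "real \<Rightarrow> real"
    and fc :: "nat \<Rightarrow> real \<Rightarrow> real \<Rightarrow> real"
    and f :: "(nat \<Rightarrow> real) \<Rightarrow> real"
    and m :: "nat \<Rightarrow> enat" and mmax :: enat
  assumes f1_nonneg: "\<forall>t. f1 t \<ge> 0"
    and f1_density: "(f1 has_integral 1) UNIV"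
    and fc_nonneg: "\<forall>i\<in>{2..d}. \<forall>t s. fc i t s \<ge> 0"
    and fc_density: "\<forall>i\<in>{2..d}. \<forall>s. ((\<lambda>t. fc i t s) has_integral 1) UNIV"
    and f_def: "\<forall>x. f x = (\<Prod>i\<in>{2..d}. fc i (x i) (x (i - 1))) * f1 (x 1)"
    and m_def: "\<forall>i. m i = frank UNIV UNIV (fc i)"
    and mmax_def: "mmax = Max (m ` {2..d})"
    and kd: "2 * k + 1 \<le> d"
  shows "(2 * k + 1 < d \<longrightarrow>
            alpha_rank d ((\<lambda>j. 2 * j + 1) ` {..k}) f \<le> (\<Prod>i\<in>{2..2*k+2}. m i)
          \<and> (\<Prod>i\<in>{2..2*k+2}. m i) \<le> mmax ^ (2 * k + 1))
       \<and> (2 * k + 1 = d \<longrightarrow>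
            alpha_rank d ((\<lambda>j. 2 * j + 1) ` {..k}) f \<le> (\<Prod>i\<in>{2..2*k+1}. m i)
          \<and> (\<Prod>i\<in>{2..2*k+1}. m i) \<le> mmax ^ (2 * k))"
  proof -
  have mle: "m i \<le> mmax" if "i \<in> {2..d}" for i
    unfolding mmax_def using that by (intro Max_ge) auto
  have m_eq: "(\<Prod>i\<in>{2..n}. m i) = (\<Prod>i\<in>{2..n}. frank UNIV UNIV (fc i))" for n
    using m_def by simp
  show ?thesis
  proof (intro conjI impI)
    assume "2*k+1 < d"
    then have "alpha_rank d ((\<lambda>j. 2 * j + 1) ` {..k}) f \<le> (\<Prod>i\<in>{2..2*k+2}. frank UNIV UNIV (fc i))"
      by (intro key[OF f_def]) auto
    then show "alpha_rank d ((\<lambda>j. 2 * j + 1) ` {..k}) f \<le> (\<Prod>i\<in>{2..2*k+2}. m i)"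
      by (simp only: m_eq)
    have "(\<Prod>i\<in>{2..2*k+2}. m i) \<le> mmax ^ card {2..2*k+2}"
      by (rule enat_prod_le_pow) (use \<open>2*k+1 < d\<close> mle in auto)
    then show "(\<Prod>i\<in>{2..2*k+2}. m i) \<le> mmax ^ (2*k+1)" by simp
  next
    assume d: "2*k+1 = d"
    then have "alpha_rank d ((\<lambda>j. 2 * j + 1) ` {..k}) f \<le> (\<Prod>i\<in>{2..2*k+1}. frank UNIV UNIV (fc i))"
      by (intro key[OF f_def]) auto
    then show "alpha_rank d ((\<lambda>j. 2 * j + 1) ` {..k}) f \<le> (\<Prod>i\<in>{2..2*k+1}. m i)"
      by (simp only: m_eq)
    have "(\<Prod>i\<in>{2..2*k+1}. m i) \<le> mmax ^ card {2..2*k+1}"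
      by (rule enat_prod_le_pow) (use d mle in auto)
    then show "(\<Prod>i\<in>{2..2*k+1}. m i) \<le> mmax ^ (2*k)" by simp
  qed
qed

end
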